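(* For every $k\ge 0$, the complete graph $K_{3k+4}$ is a semi-arc $k$-visibility graph.
   Context: A semi-arc $k$-visibility representation is a finite collection of pairwise disjoint circular arcs centered at a common point $O$, all starting on one common radial ray from $O$ and extending counterclockwise from it. A line of sight is a segment contained in a line through $O$ (it may pass through $O$) with endpoints on two arcs and intersecting at most $k$ other arcs (an arc met twice by the radial line is counted once). The semi-arc $k$-visibility graph has one vertex per arc, two vertices being adjacent when their arcs are joined by a line of sight. *)

theory Defs
  imports "HOL-Analysis.Analysis"
begin

text \<open>The plane is the complex plane, the common centre O is the origin 0.
  An arc with start angle alpha (the common radial ray), radius r and angular
  extent theta is the closed set of points r * cis phi, alpha <= phi <= alpha + theta,
  i.e. it starts on the ray of angle alpha and extends counterclockwise.\<close>

definition sarc :: "real \<Rightarrow> real \<Rightarrow> real \<Rightarrow> complex set" where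
  "sarc alpha r theta = {complex_of_real r * cis phi | phi. alpha \<le> phi \<and> phi \<le> alpha + theta}"

definition semi_arc_rep :: "real \<Rightarrow> ('v \<Rightarrow> real) \<Rightarrow> ('v \<Rightarrow> real) \<Rightarrow> 'v set \<Rightarrow> bool" where
  "semi_arc_rep alpha r theta V \<longleftrightarrow>
     finite V \<and>
     (\<forall>v\<in>V. 0 < r v \<and> 0 < theta v \<and> theta v < 2 * pi) \<and>
     (\<forall>u\<in>V. \<forall>v\<in>V. u \<noteq> v \<longrightarrow> sarc alpha (r u) (theta u) \<inter> sarc alpha (r v) (theta v) = {})"

definition line_of_sight :: "nat \<Rightarrow> real \<Rightarrow> ('v \<Rightarrow> real) \<Rightarrow> ('v \<Rightarrow> real) \<Rightarrow> 'v set \<Rightarrow> 'v \<Rightarrow> 'v \<Rightarrow> bool" where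
  "line_of_sight k alpha r theta V a b \<longleftrightarrow>
     (\<exists>p q. p \<in> sarc alpha (r a) (theta a) \<and> q \<in> sarc alpha (r b) (theta b) \<and>
        collinear {0, p, q} \<and>
        card {c \<in> V - {a, b}. closed_segment p q \<inter> sarc alpha (r c) (theta c) \<noteq> {}} \<le> k)"

definition semi_arc_k_visibility_graph :: "nat \<Rightarrow> 'v set \<Rightarrow> ('v \<Rightarrow> 'v \<Rightarrow> bool) \<Rightarrow> bool" where
  "semi_arc_k_visibility_graph k V E \<longleftrightarrow>
     (\<exists>alpha r theta. semi_arc_rep alpha r theta V \<and>
        (\<forall>a\<in>V. \<forall>b\<in>V. a \<noteq> b \<longrightarrow> (E a b \<longleftrightarrow> line_of_sight k alpha r theta V a b)))"

end

theory Submission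
  imports Defs
begin


lemma arc_point:
  assumes "z \<in> sarc 0 r th" "0 < r" "th < 2*pi"
    "z = complex_of_real s * cis psi" "0 < s" "0 \<le> psi" "psi < 2*pi"
  shows "s = r \<and> psi \<le> th"
proof -
  from assms(1) obtain phi where z: "z = complex_of_real r * cis phi" and ph: "0 \<le> phi" "phi \<le> th"
    unfolding sarc_def by auto
  have "norm z = s" unfolding assms(4) using assms(5) by (simp add: norm_mult)
  moreover have "norm z = r" unfolding z using assms(2) by (simp add: norm_mult)
  ultimately have sr: "s = r" by simp
  have "Arg2pi z = psi"
    by (rule Arg2pi_unique[of s psi]) (use assms in \<open>auto simp: cis_conv_exp\<close>)
  moreover have "Arg2pi z = phi"
    by (rule Arg2pi_unique[of r phi]) (use assms z ph in \<open>auto simp: cis_conv_exp\<close>)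
  ultimately show ?thesis using sr ph by simp
qed

lemma arc_norm: "z \<in> sarc 0 r th \<Longrightarrow> 0 < r \<Longrightarrow> norm z = r"
  unfolding sarc_def by (auto simp: norm_mult)

lemma seg_same_ray:
  assumes "z \<in> closed_segment (complex_of_real ra * cis phi) (complex_of_real rb * cis phi)"
    "0 < ra" "ra \<le> rb"
  shows "ra \<le> norm z \<and> norm z \<le> rb"
proof -
  from assms(1) obtain u where u: "0 \<le> u" "u \<le> 1"
    and z: "z = (1-u) *\<^sub>R (complex_of_real ra * cis phi) + u *\<^sub>R (complex_of_real rb * cis phi)"
    unfolding closed_segment_def by auto
  have zt: "z = complex_of_real ((1-u)*ra + u*rb) * cis phi"
    using z by (simp add: scaleR_conv_of_real algebra_simps)
  have "norm z = \<bar>(1-u)*ra + u*rb\<bar>" unfolding zt norm_mult norm_cis norm_of_real by simp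
  moreover have "ra \<le> (1-u)*ra + u*rb" "(1-u)*ra + u*rb \<le> rb"
    using u assms(2,3) mult_right_mono[of ra rb u] mult_left_le[of u "rb-ra"] by (auto simp: algebra_simps)
  ultimately show ?thesis using assms by auto
qed

lemma seg_through_O:
  assumes "z \<in> closed_segment (complex_of_real ra * cis phi) (complex_of_real rb * cis (phi + pi))"
    "0 < ra" "0 < rb"
  shows "\<exists>t. z = complex_of_real t * cis phi \<and> -rb \<le> t \<and> t \<le> ra"
proof -
  from assms(1) obtain u where u: "0 \<le> u" "u \<le> 1"
    and z: "z = (1-u) *\<^sub>R (complex_of_real ra * cis phi) + u *\<^sub>R (complex_of_real rb * cis (phi+pi))"
    unfolding closed_segment_def by auto
  have cp: "cis (phi + pi) = - cis phi" by (simp add: cis_mult[symmetric])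
  have ze: "z = complex_of_real ((1-u)*ra - u*rb) * cis phi"
    using z cp by (simp add: scaleR_conv_of_real algebra_simps)
  have h1: "ra*u \<le> ra" "rb*u \<le> rb" "0 \<le> ra*u" "0 \<le> rb*u"
    using u assms(2,3) by (simp_all add: mult_left_le)
  have "-rb \<le> (1-u)*ra - u*rb" "(1-u)*ra - u*rb \<le> ra"
    using h1 by (simp_all add: algebra_simps)
  then show ?thesis using ze by blast
qed

lemma blk_ray:
  assumes pos: "\<forall>v\<in>V. 0 < r v" and ab: "r a \<le> r b" "0 < r a"
  shows "{c\<in>V-{a,b}. closed_segment (complex_of_real (r a) * cis phi) (complex_of_real (r b) * cis phi) \<inter> sarc 0 (r c) (th c) \<noteq> {}}
     \<subseteq> {c\<in>V-{a,b}. r a \<le> r c \<and> r c \<le> r b}"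
proof
  fix c assume "c \<in> {c\<in>V-{a,b}. closed_segment (complex_of_real (r a) * cis phi) (complex_of_real (r b) * cis phi) \<inter> sarc 0 (r c) (th c) \<noteq> {}}"
  then obtain z where c: "c \<in> V-{a,b}" and z1: "z \<in> closed_segment (complex_of_real (r a) * cis phi) (complex_of_real (r b) * cis phi)"
    and z2: "z \<in> sarc 0 (r c) (th c)" by blast
  have "norm z = r c" using arc_norm[OF z2] pos c by auto
  with seg_same_ray[OF z1 ab(2) ab(1)] c show "c \<in> {c\<in>V-{a,b}. r a \<le> r c \<and> r c \<le> r b}" by auto
qed

lemma blk_O:
  assumes pos: "\<forall>v\<in>V. 0 < r v \<and> th v < 2*pi" and ab: "0 < r a" "0 < r b"
    and phi: "0 \<le> phi" "phi + pi < 2*pi"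
  shows "{c\<in>V-{a,b}. closed_segment (complex_of_real (r a) * cis phi) (complex_of_real (r b) * cis (phi+pi)) \<inter> sarc 0 (r c) (th c) \<noteq> {}}
     \<subseteq> {c\<in>V-{a,b}. (r c \<le> r a \<and> phi \<le> th c) \<or> (r c \<le> r b \<and> phi + pi \<le> th c)}"
proof
  fix c assume "c \<in> {c\<in>V-{a,b}. closed_segment (complex_of_real (r a) * cis phi) (complex_of_real (r b) * cis (phi+pi)) \<inter> sarc 0 (r c) (th c) \<noteq> {}}"
  then obtain z where c: "c \<in> V-{a,b}" and z1: "z \<in> closed_segment (complex_of_real (r a) * cis phi) (complex_of_real (r b) * cis (phi+pi))"
    and z2: "z \<in> sarc 0 (r c) (th c)" by blast
  obtain t where t: "z = complex_of_real t * cis phi" "-r b \<le> t" "t \<le> r a"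
    using seg_through_O[OF z1 ab] by blast
  have rc: "0 < r c" "th c < 2*pi" using pos c by auto
  consider "t > 0" | "t < 0" | "t = 0" by linarith
  then show "c \<in> {c\<in>V-{a,b}. (r c \<le> r a \<and> phi \<le> th c) \<or> (r c \<le> r b \<and> phi + pi \<le> th c)}"
  proof cases
    case 1
    from arc_point[OF z2 rc(1) rc(2) t(1) 1 phi(1)] phi t c show ?thesis by auto
  next
    case 2
    have cp: "cis (phi + pi) = - cis phi" by (simp add: cis_mult[symmetric])
    have "z = complex_of_real (-t) * cis (phi + pi)" using t(1) cp by simp
    from arc_point[OF z2 rc(1) rc(2) this] 2 phi t c show ?thesis by auto
  next
    case 3
    then have "z = 0" using t by simp
    with arc_norm[OF z2 rc(1)] rc show ?thesis by simp
  qed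
qed

lemma los_I:
  assumes "p \<in> sarc 0 (r a) (th a)" "q \<in> sarc 0 (r b) (th b)" "collinear {0, p, q}"
    "{c\<in>V-{a,b}. closed_segment p q \<inter> sarc 0 (r c) (th c) \<noteq> {}} \<subseteq> S" "finite S" "card S \<le> k"
  shows "line_of_sight k 0 r th V a b"
  unfolding line_of_sight_def
  using assms card_mono[OF assms(5,4)] by (intro exI[of _ p] exI[of _ q]) auto

lemma in_sarc: "0 \<le> phi \<Longrightarrow> phi \<le> th \<Longrightarrow> complex_of_real r * cis phi \<in> sarc 0 r th"
  unfolding sarc_def by auto

lemma coll_ray: "0 < ra \<Longrightarrow> collinear {0, complex_of_real ra * cis phi, complex_of_real rb * cis phi}"
  unfolding collinear_lemma
  by (rule disjI2, rule disjI2, rule exI[of _ "rb/ra"]) (simp add: scaleR_conv_of_real)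

lemma coll_O: "0 < ra \<Longrightarrow> collinear {0, complex_of_real ra * cis phi, complex_of_real rb * cis (phi+pi)}"
  unfolding collinear_lemma
  by (rule disjI2, rule disjI2, rule exI[of _ "-rb/ra"]) (simp add: scaleR_conv_of_real cis_mult[symmetric])



definition DD :: "nat \<Rightarrow> nat" where "DD k = 8*(k+2)"
definition XX :: "nat \<Rightarrow> nat \<Rightarrow> nat" where
  "XX k v = (if v < k+2 then 2*(k+2)+2 * v else (if v < 2*k+3 then 8*(k+2) + 2*(v-(k+2))
            else 10*(k+2)+2*(v-(2*k+3))+1))"
definition rr :: "nat \<Rightarrow> real" where "rr v = real v + 1"
definition tt :: "nat \<Rightarrow> nat \<Rightarrow> real" where "tt k v = pi * real (XX k v) / real (DD k)"

lemma XX_mono: "c < d \<Longrightarrow> XX k c < XX k d"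
  unfolding XX_def by auto

lemma XX_bounds: "v < 3*k+4 \<Longrightarrow> 0 < XX k v \<and> XX k v < 2 * DD k"
  unfolding XX_def DD_def by auto

lemma tt_le: "pi * real m / real (DD k) \<le> tt k c \<longleftrightarrow> m \<le> XX k c"
proof -
  have "0 < real (DD k)" by (simp add: DD_def)
  then show ?thesis unfolding tt_def by (simp add: divide_le_cancel mult_le_cancel_left_pos)
qed

lemma tt_shift: "pi * real m / real (DD k) + pi = pi * real (m + DD k) / real (DD k)"
proof -
  have "0 < real (DD k)" by (simp add: DD_def)
  then show ?thesis by (simp add: field_simps)
qed

lemma tt_range: "v < 3*k+4 \<Longrightarrow> 0 < tt k v \<and> tt k v < 2*pi"
proof -
  assume v: "v < 3*k+4"
  have D: "0 < real (DD k)" by (simp add: DD_def)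
  from XX_bounds[OF v] have "0 < real (XX k v)" "real (XX k v) < 2 * real (DD k)" by auto
  then show ?thesis unfolding tt_def using D by (auto simp: field_simps)
qed

lemma los_R1:
  assumes ab: "a < b" "b < 3*k+4" "b \<le> a+k+1"
  shows "line_of_sight k 0 rr (tt k) {0..<3*k+4} a b"
proof -
  let ?V = "{0..<3*k+4::nat}"
  have pos: "\<forall>v\<in>?V. 0 < rr v" by (simp add: rr_def)
  have ta: "0 < tt k a" using tt_range[of a k] ab by auto
  have tab: "tt k a \<le> tt k b" using XX_mono[OF ab(1), of k] tt_le[of "XX k a" k b] unfolding tt_def by simp
  have r: "rr a \<le> rr b" "0 < rr a" using ab by (auto simp: rr_def)
  show ?thesis
  proof (rule los_I)
    show "complex_of_real (rr a) * cis (tt k a) \<in> sarc 0 (rr a) (tt k a)" using ta by (intro in_sarc) auto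
    show "complex_of_real (rr b) * cis (tt k a) \<in> sarc 0 (rr b) (tt k b)" using ta tab by (intro in_sarc) auto
    show "collinear {0, complex_of_real (rr a) * cis (tt k a), complex_of_real (rr b) * cis (tt k a)}"
      using r by (intro coll_ray) auto
    have "{c\<in>?V-{a,b}. rr a \<le> rr c \<and> rr c \<le> rr b} \<subseteq> {a<..<b}" by (auto simp: rr_def)
    with blk_ray[OF pos r, of "tt k a" "tt k"]
    show "{c\<in>?V-{a,b}. closed_segment (complex_of_real (rr a) * cis (tt k a)) (complex_of_real (rr b) * cis (tt k a)) \<inter> sarc 0 (rr c) (tt k c) \<noteq> {}} \<subseteq> {a<..<b}"
      by blast
    show "finite {a<..<b}" by simp
    show "card {a<..<b} \<le> k" using ab by simp
  qed
qed

lemma los_O: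
  assumes ab: "a < b" "b < 3*k+4" and m: "m \<le> XX k a" "m + DD k \<le> XX k b"
    and cd: "card {c\<in>{0..<3*k+4}-{a,b}. (c \<le> a \<and> m \<le> XX k c) \<or> (c \<le> b \<and> m + DD k \<le> XX k c)} \<le> k"
  shows "line_of_sight k 0 rr (tt k) {0..<3*k+4} a b"
proof -
  let ?V = "{0..<3*k+4::nat}"
  define phi where "phi = pi * real m / real (DD k)"
  have D: "0 < real (DD k)" by (simp add: DD_def)
  have pos: "\<forall>v\<in>?V. 0 < rr v \<and> tt k v < 2*pi" using tt_range by (auto simp: rr_def)
  have r: "0 < rr a" "0 < rr b" by (auto simp: rr_def)
  have ph0: "0 \<le> phi" unfolding phi_def using D by simp
  have pha: "phi \<le> tt k a" unfolding phi_def using tt_le m by simp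
  have phb: "phi + pi \<le> tt k b" unfolding phi_def tt_shift using tt_le[of "m + DD k" k b] m by linarith
  have phb2: "phi + pi < 2*pi" using phb tt_range[of b k] ab by auto
  show ?thesis
  proof (rule los_I)
    show "complex_of_real (rr a) * cis phi \<in> sarc 0 (rr a) (tt k a)" using ph0 pha by (intro in_sarc) auto
    show "complex_of_real (rr b) * cis (phi+pi) \<in> sarc 0 (rr b) (tt k b)" using ph0 phb by (intro in_sarc) auto
    show "collinear {0, complex_of_real (rr a) * cis phi, complex_of_real (rr b) * cis (phi+pi)}"
      using r by (intro coll_O) auto
    have "{c\<in>?V-{a,b}. (rr c \<le> rr a \<and> phi \<le> tt k c) \<or> (rr c \<le> rr b \<and> phi + pi \<le> tt k c)}
       = {c\<in>?V-{a,b}. (c \<le> a \<and> m \<le> XX k c) \<or> (c \<le> b \<and> m + DD k \<le> XX k c)}"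
      unfolding phi_def tt_shift tt_le by (auto simp: rr_def)
    with blk_O[OF pos r ph0 phb2]
    show "{c\<in>?V-{a,b}. closed_segment (complex_of_real (rr a) * cis phi) (complex_of_real (rr b) * cis (phi+pi)) \<inter> sarc 0 (rr c) (tt k c) \<noteq> {}}
       \<subseteq> {c\<in>?V-{a,b}. (c \<le> a \<and> m \<le> XX k c) \<or> (c \<le> b \<and> m + DD k \<le> XX k c)}"
      by blast
    show "finite {c\<in>?V-{a,b}. (c \<le> a \<and> m \<le> XX k c) \<or> (c \<le> b \<and> m + DD k \<le> XX k c)}" by simp
  qed (rule cd)
qed



lemma card_le_ivl: "T \<subseteq> {lo..<hi::nat} \<Longrightarrow> hi - lo \<le> k \<Longrightarrow> card T \<le> k"
  using card_mono[of "{lo..<hi}" T] by simp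

lemma grp: "(c < k+2 \<and> XX k c = 2*k+4+2*c) \<or> (k+2 \<le> c \<and> c < 2*k+3 \<and> XX k c + 2*k+4 = 8*k+16+2*c)
   \<or> (2*k+3 \<le> c \<and> XX k c + 4*k+6 = 10*k+21+2*c)"
  unfolding XX_def by auto
lemma ar1: "c < 3*k+4 \<Longrightarrow> c \<noteq> a \<Longrightarrow> c \<noteq> b \<Longrightarrow> (c \<le> a \<and> 2*j \<le> XX k c) \<or> (c \<le> b \<and> 2*j + D \<le> XX k c) \<Longrightarrow>
  D = 8*k+16 \<Longrightarrow> b = k+2+j \<Longrightarrow> b < 2*k+3 \<Longrightarrow> 0 \<le> c \<and> c < a"
  using grp[of c k] apply (elim disjE conjE) apply linarith+ done
lemma ar2: "c < 3*k+4 \<Longrightarrow> c \<noteq> a \<Longrightarrow> c \<noteq> b \<Longrightarrow> (c \<le> a \<and> XX k a \<le> XX k c) \<or> (c \<le> b \<and> XX k a + D \<le> XX k c) \<Longrightarrow>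
  D = 8*k+16 \<Longrightarrow> b = 2*k+3+j \<Longrightarrow> XX k a = 2*k+4+2*a \<Longrightarrow> a < k+2 \<Longrightarrow> 2*k+3+a \<le> c \<and> c < b"
  using grp[of c k] apply (elim disjE conjE) apply linarith+ done
lemma ar3:
  assumes h: "c < 3*k+4" "c \<noteq> a" "c \<noteq> b" "(c \<le> a \<and> 2*k+4+2*j+1 \<le> XX k c) \<or> (c \<le> b \<and> 2*k+4+2*j+1 + D \<le> XX k c)"
   "D = 8*k+16" "b = 2*k+3+j" "a < 2*k+3" "b < 3*k+4"
  shows "j < c \<and> c < a"
proof -
  have "c < a \<or> a < c" "c < b \<or> b < c" using h by auto
  then show ?thesis using grp[of c k] h(4) apply - apply (elim disjE conjE) using h by linarith+
qed

lemma T_sub: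
  assumes "\<And>c. c < 3*k+4 \<Longrightarrow> c \<noteq> a \<Longrightarrow> c \<noteq> b \<Longrightarrow> (c \<le> a \<and> m \<le> XX k c) \<or> (c \<le> b \<and> m + DD k \<le> XX k c) \<Longrightarrow> lo \<le> c \<and> c < hi"
    "hi - lo \<le> k"
  shows "card {c\<in>{0..<3*k+4}-{a,b}. (c \<le> a \<and> m \<le> XX k c) \<or> (c \<le> b \<and> m + DD k \<le> XX k c)} \<le> k"
  by (rule card_le_ivl[of _ lo hi]) (use assms in auto)

lemma los_lt:
  assumes ab: "a < b" "b < 3*k+4"
  shows "line_of_sight k 0 rr (tt k) {0..<3*k+4} a b"
proof (cases "b \<le> a+k+1")
  case True
  then show ?thesis using los_R1 ab by blast
next
  case far: False
  have D: "DD k = 8*k+16" by (simp add: DD_def)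
  show ?thesis
  proof (cases "a < k+2")
    case aA: True
    have XA: "XX k a = 2*k+4+2*a" using aA by (simp add: XX_def)
    show ?thesis
    proof (cases "b < 2*k+3")
      case True
      define j where "j = b - (k+2)"
      have j: "b = k+2+j" using far unfolding j_def by linarith
      have XB: "XX k b = 8*k+16+2*j" using j True by (simp add: XX_def)
      show ?thesis
      proof (rule los_O[OF ab, of "2*j"])
        show "2*j \<le> XX k a" "2*j + DD k \<le> XX k b"
          using XA XB D True j by auto
        show "card {c\<in>{0..<3*k+4}-{a,b}. (c \<le> a \<and> 2*j \<le> XX k c) \<or> (c \<le> b \<and> 2*j + DD k \<le> XX k c)} \<le> k"
        proof (rule T_sub[of k a b _ 0 a])
          fix c assume c: "c < 3*k+4" "c \<noteq> a" "c \<noteq> b" "(c \<le> a \<and> 2*j \<le> XX k c) \<or> (c \<le> b \<and> 2*j + DD k \<le> XX k c)"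
          from ar1[OF c D j True] show "0 \<le> c \<and> c < a" .
        next
          show "a - 0 \<le> k" using far True j by linarith
        qed
      qed
    next
      case bC: False
      define j where "j = b - (2*k+3)"
      have j: "b = 2*k+3+j" using bC unfolding j_def by linarith
      have XC: "XX k b = 10*k+21+2*j" using j by (simp add: XX_def)
      show ?thesis
      proof (cases "j \<ge> a")
        case True
        show ?thesis
        proof (rule los_O[OF ab, of "XX k a"])
          show "XX k a \<le> XX k a" by simp
          show "XX k a + DD k \<le> XX k b"
            using True XA XC D by auto
          show "card {c\<in>{0..<3*k+4}-{a,b}. (c \<le> a \<and> XX k a \<le> XX k c) \<or> (c \<le> b \<and> XX k a + DD k \<le> XX k c)} \<le> k"
          proof (rule T_sub[of k a b _ "2*k+3+a" b])
            fix c assume c: "c < 3*k+4" "c \<noteq> a" "c \<noteq> b" "(c \<le> a \<and> XX k a \<le> XX k c) \<or> (c \<le> b \<and> XX k a + DD k \<le> XX k c)"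
            from ar2[OF c D j XA aA] show "2*k+3+a \<le> c \<and> c < b" .
          next
            show "b - (2*k+3+a) \<le> k" using j ab by linarith
          qed
        qed
      next
        case False
        show ?thesis
        proof (rule los_O[OF ab, of "2*k+4+2*j+1"])
          show "2*k+4+2*j+1 \<le> XX k a" "2*k+4+2*j+1 + DD k \<le> XX k b"
            using False XA XC D by auto
          show "card {c\<in>{0..<3*k+4}-{a,b}. (c \<le> a \<and> 2*k+4+2*j+1 \<le> XX k c) \<or> (c \<le> b \<and> 2*k+4+2*j+1 + DD k \<le> XX k c)} \<le> k"
          proof (rule T_sub[of k a b _ "j+1" a])
            fix c assume c: "c < 3*k+4" "c \<noteq> a" "c \<noteq> b" "(c \<le> a \<and> 2*k+4+2*j+1 \<le> XX k c) \<or> (c \<le> b \<and> 2*k+4+2*j+1 + DD k \<le> XX k c)"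
            from ar3[OF c D j _ ab(2)] aA show "j+1 \<le> c \<and> c < a" by simp
          next
            show "a - (j+1) \<le> k" using aA by linarith
          qed
        qed
      qed
    qed
  next
    case aB: False
    have bC: "b \<ge> 2*k+3" "a < 2*k+3" using far ab aB by auto
    define j where "j = b - (2*k+3)"
    have j: "b = 2*k+3+j" using bC unfolding j_def by linarith
    have XC: "XX k b = 10*k+21+2*j" using j by (simp add: XX_def)
    have XB: "XX k a + 2*k+4 = 8*k+16+2*a" using aB bC by (simp add: XX_def)
    show ?thesis
    proof (rule los_O[OF ab, of "2*k+4+2*j+1"])
      show "2*k+4+2*j+1 \<le> XX k a" "2*k+4+2*j+1 + DD k \<le> XX k b"
        using XB XC D j ab by auto
      show "card {c\<in>{0..<3*k+4}-{a,b}. (c \<le> a \<and> 2*k+4+2*j+1 \<le> XX k c) \<or> (c \<le> b \<and> 2*k+4+2*j+1 + DD k \<le> XX k c)} \<le> k"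
      proof (rule T_sub[of k a b _ "j+1" a])
        fix c assume c: "c < 3*k+4" "c \<noteq> a" "c \<noteq> b" "(c \<le> a \<and> 2*k+4+2*j+1 \<le> XX k c) \<or> (c \<le> b \<and> 2*k+4+2*j+1 + DD k \<le> XX k c)"
        from ar3[OF c D j bC(2) ab(2)] show "j+1 \<le> c \<and> c < a" by simp
      next
        show "a - (j+1) \<le> k" using far j by linarith
      qed
    qed
  qed
qed


lemma los_sym: "line_of_sight k al r th V a b \<Longrightarrow> line_of_sight k al r th V b a"
proof -
  assume "line_of_sight k al r th V a b"
  then obtain p q where pq: "p \<in> sarc al (r a) (th a)" "q \<in> sarc al (r b) (th b)" "collinear {0, p, q}"
    "card {c \<in> V - {a, b}. closed_segment p q \<inter> sarc al (r c) (th c) \<noteq> {}} \<le> k"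
    unfolding line_of_sight_def by blast
  have e1: "{0, q, p} = {0, p, q}" by blast
  have e2: "V - {b, a} = V - {a, b}" by blast
  show ?thesis unfolding line_of_sight_def
    by (rule exI[of _ q], rule exI[of _ p]) (use pq in \<open>simp add: e1 e2 closed_segment_commute\<close>)
qed

theorem mainTheorem7:
  fixes k :: nat
  shows "semi_arc_k_visibility_graph k {0..<3*k+4} (\<lambda>a b. a \<noteq> (b::nat))"
  unfolding semi_arc_k_visibility_graph_def
proof (intro exI conjI)
  have pos: "\<forall>v\<in>{0..<3*k+4}. 0 < rr v \<and> 0 < tt k v \<and> tt k v < 2 * pi"
    using tt_range by (auto simp: rr_def)
  have dis: "\<forall>u\<in>{0..<3*k+4}. \<forall>v\<in>{0..<3*k+4}. u \<noteq> v \<longrightarrow> sarc 0 (rr u) (tt k u) \<inter> sarc 0 (rr v) (tt k v) = {}"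
  proof (intro ballI impI)
    fix u v assume uv: "u \<in> {0..<3*k+4}" "v \<in> {0..<3*k+4}" "u \<noteq> v"
    show "sarc 0 (rr u) (tt k u) \<inter> sarc 0 (rr v) (tt k v) = {}"
    proof (rule ccontr)
      assume "sarc 0 (rr u) (tt k u) \<inter> sarc 0 (rr v) (tt k v) \<noteq> {}"
      then obtain z where z: "z \<in> sarc 0 (rr u) (tt k u)" "z \<in> sarc 0 (rr v) (tt k v)" by blast
      have "norm z = rr u" by (rule arc_norm[OF z(1)]) (simp add: rr_def)
      moreover have "norm z = rr v" by (rule arc_norm[OF z(2)]) (simp add: rr_def)
      ultimately have "rr u = rr v" by simp
      then show False using uv by (simp add: rr_def)
    qed
  qed
  show "semi_arc_rep 0 rr (tt k) {0..<3*k+4}"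
    unfolding semi_arc_rep_def using pos dis by simp
  show "\<forall>a\<in>{0..<3*k+4}. \<forall>b\<in>{0..<3*k+4}. a \<noteq> b \<longrightarrow> (a \<noteq> b) = line_of_sight k 0 rr (tt k) {0..<3*k+4} a b"
  proof (intro ballI impI)
    fix a b assume ab: "a \<in> {0..<3*k+4}" "b \<in> {0..<3*k+4}" "a \<noteq> b"
    show "(a \<noteq> b) = line_of_sight k 0 rr (tt k) {0..<3*k+4} a b"
    proof (cases "a < b")
      case True then show ?thesis using los_lt[of a b k] ab by auto
    next
      case False then have "b < a" using ab by simp
      then show ?thesis using los_lt[of b a k] los_sym ab by auto
    qed
  qed
qed


end
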